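(* Let $\Sigma=\{a_1,\dots,a_n\}$ be an alphabet, let $\varphi:\Sigma^+\to\Sigma^+$ be a Parikh-positive morphism, and let $W=\{\varphi(a_i)\mid 1\leq i\leq n\}$. If $|W|<n$, then $\varphi$ is reducible.
   Context: A morphism $\varphi:\Sigma^+\to\Sigma^+$ satisfies $\varphi(uv)=\varphi(u)\varphi(v)$ (non-empty images); it is Parikh-positive if every letter of $\Sigma$ occurs in $\varphi(a_1)\cdots\varphi(a_n)$. An automorphism is an injective morphism mapping each letter to a single letter. $\varphi$ is reducible if $\varphi=\psi_2\circ\psi_1$ for morphisms $\psi_1,\psi_2:\Sigma^+\to\Sigma^+$ neither of which is an automorphism. *)

theory Defs
  imports Main
begin

text \<open>Alphabet: a finite type 'a (Sigma = UNIV, n = CARD('a)).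
 Words of Sigma^+ are nonempty lists; a map Sigma^+ to Sigma^+ is modelled as a
 function on lists whose values on the empty list are irrelevant.\<close>

definition is_morphism :: "('a list \<Rightarrow> 'a list) \<Rightarrow> bool" where
  "is_morphism f \<longleftrightarrow>
     (\<forall>u v. u \<noteq> [] \<longrightarrow> v \<noteq> [] \<longrightarrow> f (u @ v) = f u @ f v) \<and>
     (\<forall>w. w \<noteq> [] \<longrightarrow> f w \<noteq> [])"

definition parikh_positive :: "('a::finite list \<Rightarrow> 'a list) \<Rightarrow> bool" where
  "parikh_positive f \<longleftrightarrow> (\<forall>b. \<exists>a. b \<in> set (f [a]))"

definition is_automorphism :: "('a list \<Rightarrow> 'a list) \<Rightarrow> bool" where
  "is_automorphism f \<longleftrightarrow> is_morphism f \<and> inj_on f {w. w \<noteq> []} \<and>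
     (\<forall>a. length (f [a]) = 1)"

definition reducible :: "('a list \<Rightarrow> 'a list) \<Rightarrow> bool" where
  "reducible f \<longleftrightarrow> (\<exists>g1 g2. is_morphism g1 \<and> is_morphism g2 \<and>
      \<not> is_automorphism g1 \<and> \<not> is_automorphism g2 \<and>
      (\<forall>w. w \<noteq> [] \<longrightarrow> f w = g2 (g1 w)))"

end

theory Submission
  imports Defs
begin

lemma morph_concat:
  assumes "is_morphism phi"
  shows "w \<noteq> [] \<Longrightarrow> phi w = concat (map (\<lambda>c. phi [c]) w)"
proof (induction w)
  case Nil then show ?case by simp
next
  case (Cons x w)
  show ?case
  proof (cases "w = []")
    case True then show ?thesis by simp
  next
    case False
    have "phi (x # w) = phi ([x] @ w)" by simp
    also have "\<dots> = phi [x] @ phi w" using assms False unfolding is_morphism_def by blast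
    finally show ?thesis using Cons.IH False by simp
  qed
qed

theorem proposition3:
  fixes phi :: "'a::finite list \<Rightarrow> 'a list"
  assumes "is_morphism phi"
    and "parikh_positive phi"
    and "card ((\<lambda>a. phi [a]) ` UNIV) < card (UNIV :: 'a set)"
  shows "reducible phi"
proof -
  have "\<not> inj (\<lambda>a. phi [a])"
    using assms(3) card_image by (metis less_irrefl)
  then obtain a b where ab: "a \<noteq> b" "phi [a] = phi [b]"
    unfolding inj_def by blast
  define s where "s = id(b := a)"
  define g1 :: "'a list \<Rightarrow> 'a list" where "g1 = map s"
  define g2 :: "'a list \<Rightarrow> 'a list" where "g2 = (\<lambda>w. concat (map (\<lambda>c. phi [c]) w))"
  have ne: "\<And>c. phi [c] \<noteq> []" using assms(1) unfolding is_morphism_def by blast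
  have m1: "is_morphism g1" unfolding is_morphism_def g1_def by simp
  have m2: "is_morphism g2" unfolding is_morphism_def g2_def
    using ne by (auto simp: neq_Nil_conv)
  have n1: "\<not> is_automorphism g1"
  proof
    assume "is_automorphism g1"
    then have "inj_on g1 {w. w \<noteq> []}" unfolding is_automorphism_def by blast
    moreover have "g1 [a] = g1 [b]" unfolding g1_def s_def by simp
    ultimately show False using ab(1) unfolding inj_on_def by blast
  qed
  have n2: "\<not> is_automorphism g2"
  proof
    assume "is_automorphism g2"
    then have "inj_on g2 {w. w \<noteq> []}" unfolding is_automorphism_def by blast
    moreover have "g2 [a] = g2 [b]" unfolding g2_def using ab(2) by simp
    ultimately show False using ab(1) unfolding inj_on_def by blast
  qed
  have ps: "\<And>c. phi [s c] = phi [c]" unfolding s_def using ab(2) by simp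
  have "\<forall>w. w \<noteq> [] \<longrightarrow> phi w = g2 (g1 w)"
  proof (intro allI impI)
    fix w :: "'a list" assume "w \<noteq> []"
    then have "phi w = concat (map (\<lambda>c. phi [c]) w)" using morph_concat[OF assms(1)] by blast
    also have "\<dots> = g2 (g1 w)" unfolding g2_def g1_def by (simp add: comp_def ps)
    finally show "phi w = g2 (g1 w)" .
  qed
  then show ?thesis unfolding reducible_def using m1 m2 n1 n2 by blast
qed

end
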